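(* For all integers $i,j,\ell$, $$\mathcal P_i(s)\mathcal P_{\ell+j}(s)-\mathcal P_j(s)\mathcal P_{\ell+i}(s)=(s^2-s+1)^{3j}\mathcal P_{i-j}(s)\mathcal P_\ell(s)$$ and $$\mathcal P_i(s)\mathcal Q_{\ell+j}(s)-\mathcal P_j(s)\mathcal Q_{\ell+i}(s)=(s^2-s+1)^{3j}\mathcal P_{i-j}(s)\mathcal Q_\ell(s).$$
   Context: Let $\mathbb F$ be a field of characteristic different from $3$ containing a primitive cube root of unity $\zeta_3$. For $i\in\mathbb Z$ define the rational functions in $\mathbb F(s)$ $$\mathcal P_i(s)=\frac{(s+\zeta_3)^{3i}-(s+\zeta_3^2)^{3i}}{3(\zeta_3-\zeta_3^2)s(s-1)},\qquad \mathcal Q_i(s)=\frac{\frac{1-\zeta_3}{3}(s+\zeta_3)^{3i-1}+\frac{1-\zeta_3^2}{3}(s+\zeta_3^2)^{3i-1}}{s-1}.$$ *)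

theory Defs
  imports "HOL-Computational_Algebra.Polynomial" "HOL-Computational_Algebra.Fraction_Field"
begin

text \<open>The field of rational functions F(s) is rendered as the fraction field of F[s].\<close>

definition cst :: "'a::field \<Rightarrow> 'a poly fract" where
  "cst c = Fract [:c:] 1"

definition svar :: "'a::field poly fract" where
  "svar = Fract [:0, 1:] 1"

definition calP :: "'a::field \<Rightarrow> int \<Rightarrow> 'a poly fract" where
  "calP z i = ((svar + cst z) powi (3 * i) - (svar + cst (z^2)) powi (3 * i))
              / (cst (3 * (z - z^2)) * svar * (svar - 1))"

definition calQ :: "'a::field \<Rightarrow> int \<Rightarrow> 'a poly fract" where
  "calQ z i = (cst ((1 - z) / 3) * (svar + cst z) powi (3 * i - 1)
              + cst ((1 - z^2) / 3) * (svar + cst (z^2)) powi (3 * i - 1))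
              / (svar - 1)"

end

theory Submission imports Defs begin
lemma ring: fixes pa qa ra pb qb rb x y :: "'b::field"
  shows "(pa*qa - pb*qb) * (x * (ra*pa) + y * (rb*pb)) - (pa - pb) * (x * (ra*pa*qa) + y * (rb*pb*qb))
     = (pa*pb) * (qa - qb) * (x * ra + y * rb)"
  by (simp add: algebra_simps)
lemma key:
  fixes a b x y :: "'b::field"
  assumes a: "a \<noteq> 0" and b: "b \<noteq> 0"
  shows "(a powi i - b powi i) * (x * a powi (l+j) + y * b powi (l+j)) - (a powi j - b powi j) * (x * a powi (l+i) + y * b powi (l+i))
     = (a*b) powi j * (a powi (i-j) - b powi (i-j)) * (x * a powi l + y * b powi l)"
proof -
  define k where "k = i - j"
  have k: "i = j + k" unfolding k_def by simp
  have e1: "a powi i = a powi j * a powi k" "b powi i = b powi j * b powi k"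
    unfolding k using a b by (simp_all add: power_int_add)
  have e2: "a powi (l+i) = a powi l * a powi j * a powi k" "b powi (l+i) = b powi l * b powi j * b powi k"
    unfolding k using a b by (simp_all add: power_int_add mult.assoc flip: add.assoc)
  have e3: "a powi (l+j) = a powi l * a powi j" "b powi (l+j) = b powi l * b powi j"
    using a b by (simp_all add: power_int_add)
  have e4: "i - j = k" unfolding k_def ..
  show ?thesis unfolding e1 e2 e3 e4 power_int_mult_distrib
    by (rule ring)
qed

lemma svar_cst: "svar + cst z = Fract [:z,1:] 1" 
  unfolding svar_def cst_def by (simp_all add: One_fract_def)
lemma svar_m1: "svar - 1 = Fract [:-1,1:] 1"
  unfolding svar_def by (simp add: One_fract_def one_pCons)
lemma fnz: "p \<noteq> 0 \<Longrightarrow> Fract p 1 \<noteq> 0" by (simp add: eq_fract Zero_fract_def)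
lemma pw3: "(x::'b::field) powi (3 * i) = (x^3) powi i"
  by (simp add: power_int_power)
lemma pw3m: "(x::'b::field) \<noteq> 0 \<Longrightarrow> x powi (3 * i - 1) = (x^3) powi i / x"
  by (simp add: power_int_diff pw3)

lemma fin: "X*Y - Z*W = c*U*V \<Longrightarrow> X/D*(Y/E) - Z/D*(W/E) = c*(U/D)*(V/E)"
  for X :: "'b::field"
  by (simp add: times_divide_times_eq flip: diff_divide_distrib)

theorem lemma3p4:
  fixes z :: "'a::field" and i j l :: int
  assumes "(3::'a) \<noteq> 0" and "z ^ 3 = 1" and "z \<noteq> 1"
  shows "(calP z i * calP z (l + j) - calP z j * calP z (l + i)
           = (svar^2 - svar + 1) powi (3 * j) * calP z (i - j) * calP z l)
    \<and> (calP z i * calQ z (l + j) - calP z j * calQ z (l + i)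
           = (svar^2 - svar + 1) powi (3 * j) * calP z (i - j) * calQ z l)"
proof -
  define A where "A = svar + cst z"
  define B where "B = svar + cst (z^2)"
  have An: "A \<noteq> 0" unfolding A_def svar_cst by (rule fnz) simp
  have Bn: "B \<noteq> 0" unfolding B_def svar_cst by (rule fnz) simp
  have zz: "z^2 + z + 1 = 0"
  proof -
    have "(z - 1) * (z^2 + z + 1) = 0" using assms(2) by (simp add: algebra_simps power3_eq_cube power2_eq_square)
    thus ?thesis using assms(3) by simp
  qed
  have pz: "[:z,1:] * [:z^2,1:] = [:1,-1,1:]"
  proof -
    have "z * z^2 = 1" using assms(2) by (simp add: power3_eq_cube power2_eq_square mult.assoc)
    moreover have "z^2 + z = -1" using zz by (simp add: algebra_simps eq_neg_iff_add_eq_0)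
    ultimately show ?thesis by (simp add: algebra_simps)
  qed
  have AB1: "svar^2 - svar + 1 = Fract [:1,-1,1:] 1"
    by (simp add: svar_def power2_eq_square mult_fract One_fract_def diff_fract add_fract one_pCons)
  have AB2: "A * B = Fract ([:z,1:] * [:z^2,1:]) 1"
    unfolding A_def B_def svar_cst mult_fract by simp
  have AB: "svar^2 - svar + 1 = A * B" unfolding AB1 AB2 pz ..
  define a where "a = A^3"
  define b where "b = B^3"
  have an: "a \<noteq> 0" and bn: "b \<noteq> 0" using An Bn by (simp_all add: a_def b_def)
  define D where "D = cst (3 * (z - z^2)) * svar * (svar - 1)"
  define x where "x = cst ((1 - z) / 3) / A"
  define y where "y = cst ((1 - z^2) / 3) / B"
  have P: "calP z n = (a powi n - b powi n) / D" for n
    unfolding calP_def D_def A_def[symmetric] B_def[symmetric] a_def b_def pw3 ..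
  have Q: "calQ z n = (x * a powi n + y * b powi n) / (svar - 1)" for n
    unfolding calQ_def A_def[symmetric] B_def[symmetric] a_def b_def x_def y_def
      pw3m[OF An] pw3m[OF Bn] by simp
  have E: "(svar^2 - svar + 1) powi (3 * j) = (a*b) powi j"
    unfolding AB pw3 a_def b_def by (simp add: power_mult_distrib)
  have k1: "(a powi i - b powi i) * (a powi (l+j) - b powi (l+j)) - (a powi j - b powi j) * (a powi (l+i) - b powi (l+i))
     = (a*b) powi j * (a powi (i-j) - b powi (i-j)) * (a powi l - b powi l)"
    using key[OF an bn, of i 1 l j "-1"] by simp
  note k2 = key[OF an bn, of i x l j y]
  show ?thesis unfolding P Q E
  proof
    show "(a powi i - b powi i) / D * ((a powi (l + j) - b powi (l + j)) / D) -
    (a powi j - b powi j) / D * ((a powi (l + i) - b powi (l + i)) / D) =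
    (a * b) powi j * ((a powi (i - j) - b powi (i - j)) / D) * ((a powi l - b powi l) / D)"
      by (rule fin[OF k1])
  next
    show "(a powi i - b powi i) / D * ((x * a powi (l + j) + y * b powi (l + j)) / (svar - 1)) -
    (a powi j - b powi j) / D * ((x * a powi (l + i) + y * b powi (l + i)) / (svar - 1)) =
    (a * b) powi j * ((a powi (i - j) - b powi (i - j)) / D) *
    ((x * a powi l + y * b powi l) / (svar - 1))"
      by (rule fin[OF k2])
  qed
qed
end
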